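(* Let $\kappa>0$ and $0<t_0<1/\kappa^2$. Let ${\mathbf x}_{t_0}\sim p_{t_0}$ and let $\hat p_0$ denote the law of $\phi_{0|t_0}({\mathbf x}_{t_0})$ (the time-$0$ outcome of running $\frac{d}{dt}{\mathbf x}_t=-\frac12\hat s_{t,\kappa\sqrt t}({\mathbf x}_t)$ backward from $t_0$). Then $$\mathrm{KL}(u_1\,\|\,\hat p_0)\le\frac{1}{3t_0(1-\kappa\sqrt{t_0})}+\log\Big(\frac{\sqrt{t_0}}{1-\kappa\sqrt{t_0}}\Big)+\log(2\sqrt{2\pi})<\infty.$$
   Context: $p_{\mathcal N}(x;\sigma)=(\sqrt{2\pi}\sigma)^{-1}e^{-x^2/(2\sigma^2)}$; $p_t(x)=\frac12(p_{\mathcal N}(x+1;\sqrt t)+p_{\mathcal N}(x-1;\sqrt t))$. Smoothed PL-ESF: $\hat s_{t,\delta}(x)=-(x+1)/t$ if $x\le\delta-1$; $-(x-1)/t$ if $x\ge1-\delta$; $\frac{\delta}{1-\delta}\frac xt$ otherwise. $\phi_{0|t}(x)=x/(1-\kappa\sqrt t)$ if $|x|\le1-\kappa\sqrt t$, and $\mathrm{sgn}(x)$ otherwise. $u_1$ is the uniform distribution on $[-1,1]$; $\mathrm{KL}(P\|Q)=\int\log\frac{dP}{dQ}dP$ if $P\ll Q$, else $+\infty$. *)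

theory Defs
  imports "HOL-Probability.Probability"
begin

definition pN :: "real \<Rightarrow> real \<Rightarrow> real" where
  "pN x \<sigma> = exp (- (x^2) / (2 * \<sigma>^2)) / (sqrt (2 * pi) * \<sigma>)"

definition p_t :: "real \<Rightarrow> real \<Rightarrow> real" where
  "p_t t x = (pN (x + 1) (sqrt t) + pN (x - 1) (sqrt t)) / 2"

text \<open>Smoothed PL-ESF (only used to motivate the flow map; stated for reference).\<close>
definition s_hat :: "real \<Rightarrow> real \<Rightarrow> real \<Rightarrow> real" where
  "s_hat t \<delta> x = (if x \<le> \<delta> - 1 then - (x + 1) / t
                   else if x \<ge> 1 - \<delta> then - (x - 1) / t
                   else \<delta> / (1 - \<delta>) * x / t)"

definition phi0 :: "real \<Rightarrow> real \<Rightarrow> real \<Rightarrow> real" where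
  "phi0 \<kappa> t x = (if \<bar>x\<bar> \<le> 1 - \<kappa> * sqrt t then x / (1 - \<kappa> * sqrt t) else sgn x)"

definition law_p :: "real \<Rightarrow> real measure" where
  "law_p t = density lborel (\<lambda>x. ennreal (p_t t x))"

definition p_hat0 :: "real \<Rightarrow> real \<Rightarrow> real measure" where
  "p_hat0 \<kappa> t0 = distr (law_p t0) borel (phi0 \<kappa> t0)"

definition u1 :: "real measure" where
  "u1 = uniform_measure lborel {-1..1}"

definition KL :: "real measure \<Rightarrow> real measure \<Rightarrow> ereal" where
  "KL P Q = (if sets P = sets Q \<and> absolutely_continuous Q P then
      enn2ereal (\<integral>\<^sup>+ x. ennreal (ln (enn2real (RN_deriv Q P x))) \<partial>P)
      - enn2ereal (\<integral>\<^sup>+ x. ennreal (- ln (enn2real (RN_deriv Q P x))) \<partial>P)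
    else \<infinity>)"

end

theory Submission
  imports Defs
begin

lemma u1_dens: "u1 = density lborel (\<lambda>y. ennreal (indicator {-1<..<1} y / 2))"
proof -
  have "u1 = density lborel (\<lambda>x. indicator {-1..1::real} x / emeasure lborel {-1..1::real})"
    unfolding u1_def uniform_measure_def ..
  also have "\<dots> = density lborel (\<lambda>y. ennreal (indicator {-1<..<1} y / 2))"
  proof (rule density_cong)
    show "AE x in lborel. indicator {-1..1::real} x / emeasure lborel {-1..1::real} = ennreal (indicator {-1<..<1} x / 2)"
      using AE_lborel_singleton[of "1::real"] AE_lborel_singleton[of "-1::real"]
    proof eventually_elim
      case (elim x)
      then show ?case
        by (auto simp: indicator_def divide_ennreal[symmetric] ennreal_numeral)
    qed
  qed auto
  finally show ?thesis .
qed

lemma sets_u1[simp]: "sets u1 = sets borel"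
  unfolding u1_def by simp

lemma prob_u1: "prob_space u1"
  unfolding u1_def by (rule prob_space_uniform_measure) auto


lemma pN_pos: "s > 0 \<Longrightarrow> pN x s > 0"
  unfolding pN_def by auto

lemma p_t_pos: "t > 0 \<Longrightarrow> p_t t x > 0"
  unfolding p_t_def using pN_pos[of "sqrt t"] by (simp add: add_pos_pos)

lemma p_t_meas[measurable]: "p_t t \<in> borel_measurable borel"
  unfolding p_t_def pN_def by measurable

lemma phi0_meas[measurable]: "phi0 k t \<in> borel_measurable borel"
  unfolding phi0_def by measurable

lemma step1:
  fixes c :: real
  assumes c: "0 < c" "c < 1"
  shows "distr (density lborel (\<lambda>x. ennreal (indicator {-c<..<c} x / (2*c)))) borel
           (\<lambda>x. if \<bar>x\<bar> \<le> c then x / c else sgn x)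
         = density lborel (\<lambda>y. ennreal (indicator {-1<..<1} y / 2))"
proof (rule measure_eqI)
  fix A :: "real set" assume A: "A \<in> sets (distr (density lborel (\<lambda>x. ennreal (indicator {-c<..<c} x / (2*c)))) borel
           (\<lambda>x. if \<bar>x\<bar> \<le> c then x / c else sgn x))"
  then have A[measurable]: "A \<in> sets borel" by simp
  have "emeasure (distr (density lborel (\<lambda>x. ennreal (indicator {-c<..<c} x / (2*c)))) borel
           (\<lambda>x. if \<bar>x\<bar> \<le> c then x / c else sgn x)) A
      = (\<integral>\<^sup>+x. ennreal (indicator {-c<..<c} x / (2*c)) * indicator A (if \<bar>x\<bar> \<le> c then x / c else sgn x) \<partial>lborel)"
  proof -
    have m: "(\<lambda>x::real. if \<bar>x\<bar> \<le> c then x / c else sgn x) \<in> borel_measurable lborel" by measurable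
    have P: "(\<lambda>x::real. if \<bar>x\<bar> \<le> c then x / c else sgn x) -` A \<in> sets lborel"
      using measurable_sets[OF m, of A] A by simp
    show ?thesis
      by (subst emeasure_distr) (auto simp: emeasure_density[OF _ P] intro!: nn_integral_cong split: split_indicator)
  qed
  also have "\<dots> = (\<integral>\<^sup>+x. ennreal (indicator {-c<..<c} x / (2*c)) * indicator A (x / c) \<partial>lborel)"
    by (rule nn_integral_cong) (auto split: split_indicator)
  also have "\<dots> = ennreal \<bar>c\<bar> * (\<integral>\<^sup>+x. ennreal (indicator {-c<..<c} (0 + c * x) / (2*c)) * indicator A ((0 + c * x) / c) \<partial>lborel)"
    using c by (intro nn_integral_real_affine) auto
  also have "\<dots> = (\<integral>\<^sup>+x. ennreal \<bar>c\<bar> * (ennreal (indicator {-c<..<c} (0 + c * x) / (2*c)) * indicator A ((0 + c * x) / c)) \<partial>lborel)"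
    by (rule nn_integral_cmult[symmetric]) auto
  also have "\<dots> = (\<integral>\<^sup>+x. ennreal (indicator {-1<..<1} x / 2) * indicator A x \<partial>lborel)"
  proof (rule nn_integral_cong)
    fix x :: real
    have "(-c < c * x \<and> c * x < c) \<longleftrightarrow> (-1 < x \<and> x < 1)"
      using c by (metis mult.right_neutral mult_less_cancel_left_pos mult_minus_right)
    then show "ennreal \<bar>c\<bar> * (ennreal (indicator {-c<..<c} (0 + c * x) / (2*c)) * indicator A ((0 + c * x) / c))
       = ennreal (indicator {-1<..<1} x / 2) * indicator A x"
      using c by (auto simp: indicator_def ennreal_mult[symmetric])
  qed
  also have "\<dots> = emeasure (density lborel (\<lambda>y. ennreal (indicator {-1<..<1} y / 2))) A"
    by (simp add: emeasure_density)
  finally show "emeasure (distr (density lborel (\<lambda>x. ennreal (indicator {-c<..<c} x / (2*c)))) borel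
           (\<lambda>x. if \<bar>x\<bar> \<le> c then x / c else sgn x)) A = emeasure (density lborel (\<lambda>y. ennreal (indicator {-1<..<1} y / 2))) A" .
qed simp

definition GG :: "real \<Rightarrow> real \<Rightarrow> real \<Rightarrow> real" where
  "GG c t y = (if -1 < y \<and> y < 1 then 1 / (2 * c * p_t t (c * y)) else 0)"

lemma GG_meas[measurable]: "GG c t \<in> borel_measurable borel"
  unfolding GG_def by measurable

lemma GG_nonneg: "0 < c \<Longrightarrow> 0 < t \<Longrightarrow> GG c t y \<ge> 0"
proof -
  assume a: "0 < c" "0 < t"
  have "p_t t (c*y) > 0" using p_t_pos[OF a(2)] .
  then show ?thesis using a unfolding GG_def by auto
qed

lemma step2:
  fixes \<kappa> t :: real
  defines "c \<equiv> 1 - \<kappa> * sqrt t"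
  assumes c: "0 < c" "c < 1" and t: "0 < t"
  shows "u1 = density (p_hat0 \<kappa> t) (\<lambda>y. ennreal (GG c t y))"
proof -
  have phi: "phi0 \<kappa> t = (\<lambda>x. if \<bar>x\<bar> \<le> c then x / c else sgn x)"
    unfolding phi0_def c_def ..
  have m1: "phi0 \<kappa> t \<in> measurable (law_p t) borel"
    unfolding law_p_def by (simp add: measurable_cong_sets[OF sets_density refl])
  have "density (p_hat0 \<kappa> t) (\<lambda>y. ennreal (GG c t y))
      = distr (density (law_p t) (\<lambda>x. ennreal (GG c t (phi0 \<kappa> t x)))) borel (phi0 \<kappa> t)"
    unfolding p_hat0_def by (rule density_distr[OF _ m1]) measurable
  also have "density (law_p t) (\<lambda>x. ennreal (GG c t (phi0 \<kappa> t x)))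
      = density lborel (\<lambda>x. ennreal (p_t t x) * ennreal (GG c t (phi0 \<kappa> t x)))"
    unfolding law_p_def by (rule density_density_eq) measurable
  also have "\<dots> = density lborel (\<lambda>x. ennreal (indicator {-c<..<c} x / (2*c)))"
  proof (rule density_cong)
    show "AE x in lborel. ennreal (p_t t x) * ennreal (GG c t (phi0 \<kappa> t x)) = ennreal (indicator {-c<..<c} x / (2*c))"
    proof (rule AE_I2)
      fix x :: real
      have px: "p_t t x > 0" using p_t_pos[OF t] .
      have "p_t t x * GG c t (phi0 \<kappa> t x) = indicator {-c<..<c} x / (2*c)"
      proof (cases "\<bar>x\<bar> < c")
        case True
        then have "-1 < x / c" "x / c < 1" using c by (auto simp: field_simps abs_less_iff)
        moreover have "c * (x / c) = x" using c by simp
        ultimately show ?thesis using True px c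
          by (auto simp: phi GG_def indicator_def abs_less_iff)
      next
        case False
        then have "phi0 \<kappa> t x = 1 \<or> phi0 \<kappa> t x = -1" using c
          by (auto simp: phi sgn_real_def)
        then show ?thesis using False by (auto simp: GG_def indicator_def abs_less_iff)
      qed
      then show "ennreal (p_t t x) * ennreal (GG c t (phi0 \<kappa> t x)) = ennreal (indicator {-c<..<c} x / (2*c))"
        using px GG_nonneg[OF c(1) t, of "phi0 \<kappa> t x"] by (simp add: ennreal_mult[symmetric])
    qed
  qed measurable
  finally show ?thesis
    using step1[OF c] u1_dens by (simp add: phi)
qed

lemma KL_eq:
  fixes \<kappa> t :: real
  defines "c \<equiv> 1 - \<kappa> * sqrt t"
  assumes c: "0 < c" "c < 1" and t: "0 < t"
    and int: "integrable u1 (\<lambda>y. ln (GG c t y))"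
  shows "KL u1 (p_hat0 \<kappa> t) = ereal (\<integral>y. ln (GG c t y) \<partial>u1)"
proof -
  let ?P = "p_hat0 \<kappa> t"
  let ?g = "\<lambda>y. ennreal (GG c t y)"
  have eq: "density ?P ?g = u1" using step2[OF c[unfolded c_def] t] unfolding c_def by simp
  have gm: "?g \<in> borel_measurable ?P" unfolding p_hat0_def by simp
  have sets: "sets u1 = sets ?P" unfolding p_hat0_def by simp
  have ac: "absolutely_continuous ?P u1"
    using absolutely_continuousI_density[OF gm] eq by simp
  have ae1: "AE y in ?P. ?g y = RN_deriv ?P u1 y"
    by (rule RN_deriv_unique_sigma_finite[OF gm eq prob_space_imp_sigma_finite[OF prob_u1]])
  then have "AE y in density ?P ?g. ?g y = RN_deriv ?P u1 y"
    by (subst AE_density[OF gm]) (auto elim: AE_mp)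
  then have ae: "AE y in u1. enn2real (RN_deriv ?P u1 y) = GG c t y"
    unfolding eq
  proof eventually_elim
    case (elim y)
    then show ?case using GG_nonneg[OF c(1) t, of y] by (metis enn2real_ennreal)
  qed
  have i1: "(\<integral>\<^sup>+ x. ennreal (ln (enn2real (RN_deriv ?P u1 x))) \<partial>u1) = (\<integral>\<^sup>+ x. ennreal (ln (GG c t x)) \<partial>u1)"
    using ae by (intro nn_integral_cong_AE) auto
  have i2: "(\<integral>\<^sup>+ x. ennreal (- ln (enn2real (RN_deriv ?P u1 x))) \<partial>u1) = (\<integral>\<^sup>+ x. ennreal (- ln (GG c t x)) \<partial>u1)"
    using ae by (intro nn_integral_cong_AE) auto
  have fin: "(\<integral>\<^sup>+ x. ennreal (ln (GG c t x)) \<partial>u1) \<noteq> \<infinity>" "(\<integral>\<^sup>+ x. ennreal (- ln (GG c t x)) \<partial>u1) \<noteq> \<infinity>"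
    using int unfolding real_integrable_def by auto
  have "KL u1 ?P = enn2ereal (\<integral>\<^sup>+ x. ennreal (ln (GG c t x)) \<partial>u1) - enn2ereal (\<integral>\<^sup>+ x. ennreal (- ln (GG c t x)) \<partial>u1)"
    unfolding KL_def using sets ac i1 i2 by simp
  also have "\<dots> = ereal (enn2real (\<integral>\<^sup>+ x. ennreal (ln (GG c t x)) \<partial>u1) - enn2real (\<integral>\<^sup>+ x. ennreal (- ln (GG c t x)) \<partial>u1))"
  proof -
    have e1: "enn2ereal X = ereal (enn2real X)" if "X \<noteq> \<infinity>" for X :: ennreal
      using that by (cases X rule: ennreal_cases) auto
    show ?thesis using fin by (simp add: e1)
  qed
  also have "\<dots> = ereal (\<integral>y. ln (GG c t y) \<partial>u1)"
    using real_lebesgue_integral_def[OF int] by simp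
  finally show ?thesis .
qed

lemma p_t_lower:
  assumes t: "0 < t" and x: "\<bar>x\<bar> \<le> 1"
  shows "exp (-((1 - \<bar>x\<bar>)^2) / (2*t)) / (2 * (sqrt (2*pi) * sqrt t)) \<le> p_t t x"
proof -
  have st: "sqrt t ^ 2 = t" using t by simp
  have pos: "sqrt (2*pi) * sqrt t > 0" using t by simp
  have n1: "pN (x+1) (sqrt t) \<ge> 0" "pN (x-1) (sqrt t) \<ge> 0"
    unfolding pN_def using pos by auto
  show ?thesis
  proof (cases "x \<ge> 0")
    case True
    then have "(x-1)^2 = (1 - \<bar>x\<bar>)^2" by (simp add: power2_commute)
    then have "pN (x-1) (sqrt t) = exp (-((1 - \<bar>x\<bar>)^2) / (2*t)) / (sqrt (2*pi) * sqrt t)"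
      unfolding pN_def st by simp
    then show ?thesis unfolding p_t_def using n1 by simp
  next
    case False
    then have "(x+1)^2 = (1 - \<bar>x\<bar>)^2" by (simp add: add.commute)
    then have "pN (x+1) (sqrt t) = exp (-((1 - \<bar>x\<bar>)^2) / (2*t)) / (sqrt (2*pi) * sqrt t)"
      unfolding pN_def st by simp
    then show ?thesis unfolding p_t_def using n1 by simp
  qed
qed

lemma pN_upper: "s > 0 \<Longrightarrow> pN x s \<le> 1 / (sqrt (2*pi) * s)"
  unfolding pN_def by (intro divide_right_mono) auto

lemma p_t_upper: "t > 0 \<Longrightarrow> p_t t x \<le> 1 / (sqrt (2*pi) * sqrt t)"
  unfolding p_t_def using pN_upper[of "sqrt t" "x+1"] pN_upper[of "sqrt t" "x-1"] by simp

lemma lnGG_upper: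
  assumes c: "0 < c" "c < 1" and t: "0 < t" and y: "-1 < y" "y < 1"
  shows "ln (GG c t y) \<le> ln (sqrt (2*pi) * sqrt t / c) + (1 - c * y^2) / (2*t)"
proof -
  let ?x = "c * y"
  have ax: "\<bar>?x\<bar> = c * \<bar>y\<bar>" using c by (simp add: abs_mult)
  have ay: "\<bar>y\<bar> < 1" using y by auto
  have x1: "\<bar>?x\<bar> \<le> 1" using ax c ay by (simp add: mult_le_one)
  let ?E = "exp (-((1 - \<bar>?x\<bar>)^2) / (2*t))"
  let ?S = "sqrt (2*pi) * sqrt t"
  have Spos: "?S > 0" using t by simp
  have low: "?E / (2 * ?S) \<le> p_t t ?x" by (rule p_t_lower[OF t x1])
  have pp: "p_t t ?x > 0" by (rule p_t_pos[OF t])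
  have "GG c t y = 1 / (2 * c * p_t t ?x)" using y by (simp add: GG_def)
  then have "ln (GG c t y) = - ln (2 * c * p_t t ?x)"
    using c pp by (simp add: ln_div)
  also have "\<dots> \<le> - ln (c * ?E / ?S)"
  proof -
    have "c * ?E / ?S \<le> 2 * c * p_t t ?x"
      using low c Spos by (simp add: field_simps)
    moreover have "c * ?E / ?S > 0" using c Spos by simp
    ultimately show ?thesis by simp
  qed
  also have "- ln (c * ?E / ?S) = ln (?S / c) + (1 - \<bar>?x\<bar>)^2 / (2*t)"
    using c Spos by (simp add: ln_div ln_mult)
  also have "(1 - \<bar>?x\<bar>)^2 \<le> 1 - c * y^2"
  proof -
    have a0: "0 \<le> 1 - \<bar>?x\<bar>" "1 - \<bar>?x\<bar> \<le> 1" using x1 by auto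
    have "(1 - \<bar>?x\<bar>)^2 \<le> 1 - \<bar>?x\<bar>" using mult_left_le_one_le[OF a0(1) a0(1) a0(2)] by (simp add: power2_eq_square)
    moreover have "y^2 \<le> \<bar>y\<bar>"
    proof -
      have "\<bar>y\<bar> * \<bar>y\<bar> \<le> \<bar>y\<bar>" using mult_left_le_one_le[of "\<bar>y\<bar>" "\<bar>y\<bar>"] ay by simp
      then show ?thesis by (metis abs_mult_self_eq power2_eq_square)
    qed
    then have "c * y^2 \<le> \<bar>?x\<bar>" using ax c by simp
    ultimately show ?thesis by simp
  qed
  then have "(1 - \<bar>?x\<bar>)^2 / (2*t) \<le> (1 - c * y^2) / (2*t)" using t by (simp add: divide_right_mono)
  finally show ?thesis by simp
qed

lemma lnGG_lower:
  assumes c: "0 < c" "c < 1" and t: "0 < t" and y: "-1 < y" "y < 1"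
  shows "ln (sqrt (2*pi) * sqrt t / (2*c)) \<le> ln (GG c t y)"
proof -
  let ?S = "sqrt (2*pi) * sqrt t"
  have Spos: "?S > 0" using t by simp
  have pp: "p_t t (c*y) > 0" by (rule p_t_pos[OF t])
  have up: "p_t t (c*y) \<le> 1 / ?S" by (rule p_t_upper[OF t])
  have "GG c t y = 1 / (2 * c * p_t t (c*y))" using y by (simp add: GG_def)
  moreover have "?S / (2*c) \<le> 1 / (2 * c * p_t t (c*y))"
    using up pp c Spos by (simp add: field_simps)
  moreover have "?S / (2*c) > 0" using c Spos by simp
  moreover have "1 / (2 * c * p_t t (c*y)) > 0" using c pp by simp
  ultimately show ?thesis by (simp del: divide_le_0_iff)
qed


lemma u1_dens2: "u1 = density lborel (\<lambda>y. ennreal (indicator {-1..1} y / 2))"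
proof -
  have "u1 = density lborel (\<lambda>x. indicator {-1..1::real} x / emeasure lborel {-1..1::real})"
    unfolding u1_def uniform_measure_def ..
  also have "\<dots> = density lborel (\<lambda>y. ennreal (indicator {-1..1} y / 2))"
    by (intro density_cong AE_I2) (auto simp: indicator_def divide_ennreal[symmetric] ennreal_numeral)
  finally show ?thesis .
qed

lemma int_L:
  fixes K B c :: real
  defines "L \<equiv> (\<lambda>y::real. K + B * (1 - c * y^2))"
  shows "integrable u1 L \<and> integral\<^sup>L u1 L = K + B * (1 - c/3)"
proof -
  let ?g = "\<lambda>y::real. indicator {-1..1} y / (2::real)"
  have gm: "?g \<in> borel_measurable lborel" by measurable
  have Lm: "L \<in> borel_measurable lborel" unfolding L_def by measurable
  have ge: "AE x in lborel. 0 \<le> ?g x" by (auto simp: indicator_def)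
  have eqf: "(\<lambda>x. ?g x *\<^sub>R L x) = (\<lambda>x. 1/2 * (indicator {-1..1} x *\<^sub>R L x))"
    by (auto simp: fun_eq_iff indicator_def)
  have i0: "integrable lborel (\<lambda>x. L x * indicator {-1..1} x)"
    by (rule borel_integrable_atLeastAtMost) (auto simp: L_def intro!: continuous_intros)
  have "integrable lborel (\<lambda>x. 1/2 * (indicator {-1..1} x *\<^sub>R L x))"
    using i0 by (intro integrable_mult_right) (simp add: mult.commute)
  then have int: "integrable u1 L"
    unfolding u1_dens2 using integrable_density[OF Lm gm ge] eqf by simp
  let ?F = "\<lambda>y::real. K * y + B * (y - c * y^3 / 3)"
  have "integral\<^sup>L lborel (\<lambda>x. indicator {-1..1} x *\<^sub>R L x) = ?F 1 - ?F (-1)"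
  proof (rule integral_FTC_atLeastAtMost)
    fix x :: real
    show "(?F has_vector_derivative L x) (at x within {-1..1})"
      unfolding has_real_derivative_iff_has_vector_derivative[symmetric] L_def
      by (auto intro!: derivative_eq_intros simp: power2_eq_square)
  qed (auto simp: L_def intro!: continuous_intros)
  then have "integral\<^sup>L u1 L = 1/2 * (?F 1 - ?F (-1))"
    unfolding u1_dens2 using integral_density[OF Lm gm ge] eqf by simp
  also have "\<dots> = K + B * (1 - c/3)" by (simp add: algebra_simps)
  finally show ?thesis using int by simp
qed


lemma final_ineq:
  fixes c t :: real
  assumes c: "0 < c" "c < 1" and t: "0 < t"
  shows "ln (sqrt (2*pi) * sqrt t / c) + 1/(2*t) * (1 - c/3)
         \<le> 1 / (3 * t * c) + ln (sqrt t / c) + ln (2 * sqrt (2 * pi))"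
proof -
  have e1: "ln (sqrt (2*pi) * sqrt t / c) = ln (sqrt (2*pi)) + ln (sqrt t / c)"
  proof -
    have "ln (sqrt (2*pi) * (sqrt t / c)) = ln (sqrt (2*pi)) + ln (sqrt t / c)"
      by (rule ln_mult_pos) (use c t in auto)
    then show ?thesis by simp
  qed
  have e2: "ln (2 * sqrt (2 * pi)) = ln 2 + ln (sqrt (2*pi))"
    by (simp add: ln_mult)
  have l2: "ln (2::real) \<ge> 0" by simp
  have "1 / (3 * t * c) - 1/(2*t) * (1 - c/3) = (1-c)*(2-c)/(6*t*c)"
    using c t by (simp add: field_simps)
  moreover have "(1-c)*(2-c)/(6*t*c) \<ge> 0" using c t by simp
  ultimately show ?thesis using e1 e2 l2 by linarith
qed


theorem mainTheorem7:
  fixes \<kappa> t0 :: real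
  assumes "\<kappa> > 0" and "0 < t0" and "t0 < 1 / \<kappa>^2"
  shows "KL u1 (p_hat0 \<kappa> t0) \<le>
           ereal (1 / (3 * t0 * (1 - \<kappa> * sqrt t0)) + ln (sqrt t0 / (1 - \<kappa> * sqrt t0))
                  + ln (2 * sqrt (2 * pi)))
         \<and> KL u1 (p_hat0 \<kappa> t0) < \<infinity>"
proof -
  define c where "c = 1 - \<kappa> * sqrt t0"
  have t: "0 < t0" by fact
  have "sqrt t0 < sqrt (1 / \<kappa>^2)" using assms(3) by (simp only: real_sqrt_less_iff)
  also have "sqrt (1 / \<kappa>^2) = 1 / \<kappa>" using assms(1) by (simp add: real_sqrt_divide)
  finally have "\<kappa> * sqrt t0 < 1" using assms(1) by (simp add: field_simps)
  then have c: "0 < c" "c < 1" using assms(1,2) by (auto simp: c_def)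
  define F where "F = (\<lambda>y. ln (GG c t0 y))"
  define K where "K = ln (sqrt (2*pi) * sqrt t0 / c)"
  define B where "B = 1 / (2 * t0)"
  define M0 where "M0 = ln (sqrt (2*pi) * sqrt t0 / (2*c))"
  define L where "L = (\<lambda>y::real. K + B * (1 - c * y^2))"
  have IL: "integrable u1 L" "integral\<^sup>L u1 L = K + B * (1 - c/3)"
    using int_L[of K B c] unfolding L_def by auto
  have aeI: "AE y in u1. -1 < y \<and> y < 1"
    unfolding u1_dens by (subst AE_density) (auto simp: indicator_def)
  have aeB: "AE y in u1. M0 \<le> F y \<and> F y \<le> L y"
    using aeI
  proof eventually_elim
    case (elim y)
    have "F y \<le> ln (sqrt (2*pi) * sqrt t0 / c) + (1 - c * y^2) / (2*t0)"
      unfolding F_def using lnGG_upper[OF c t] elim by auto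
    moreover have "(1 - c * y^2) / (2*t0) = B * (1 - c * y^2)" by (simp add: B_def)
    ultimately show ?case using lnGG_lower[OF c t, of y] elim unfolding F_def M0_def L_def K_def by auto
  qed
  interpret u: prob_space u1 by (rule prob_u1)
  have Fm: "F \<in> borel_measurable u1"
    unfolding F_def by (simp add: measurable_cong_sets[OF sets_u1 refl])
  have maj: "integrable u1 (\<lambda>y. \<bar>L y\<bar> + \<bar>M0\<bar>)" using IL(1) by auto
  have aeN: "AE x in u1. norm (F x) \<le> norm (\<bar>L x\<bar> + \<bar>M0\<bar>)"
    using aeB by eventually_elim auto
  have intF: "integrable u1 F"
    by (rule Bochner_Integration.integrable_bound[OF maj Fm aeN])
  have KLe: "KL u1 (p_hat0 \<kappa> t0) = ereal (integral\<^sup>L u1 F)"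
    using KL_eq[of \<kappa> t0] c t intF unfolding F_def c_def by simp
  have "integral\<^sup>L u1 F \<le> integral\<^sup>L u1 L"
    using aeB by (intro integral_mono_AE intF IL(1)) (auto elim: AE_mp)
  also have "\<dots> \<le> 1 / (3 * t0 * c) + ln (sqrt t0 / c) + ln (2 * sqrt (2 * pi))"
    using IL(2) final_ineq[OF c t] unfolding K_def B_def by simp
  finally show ?thesis using KLe unfolding c_def by simp
qed

end
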